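(* Fix $p\in(0,1]$ and $\lambda\in\mathbb{R}$. For any fixed $T>0$ and $a\in(0,\frac{p}{1+p})$ there exist $b_{T,a}>0$ and $C_{T,a}>0$ such that for all $b\ge b_{T,a}$ and all $t\in(-\infty,T+ap\log b]$, $$|\Psi_b(t-p\log b)-\Theta_h(t)|\le C_{T,a}\,b^{-2p(1-a)}e^{t/p},$$ and the same bound holds for the $t$-derivatives, i.e. $|\Psi_b'(t-p\log b)-\Theta_h'(t)|\le C_{T,a}b^{-2p(1-a)}e^{t/p}$ on the same interval.
   Context: Let $d=2+\frac2p$. For $b>0$ let $f$ be the unique classical solution of $f''(r)+\frac{d-1}{r}f'(r)-r^2f(r)+\lambda f(r)+|f(r)|^{2p}f(r)=0$ for $r>0$ with $f(0)=b$, $f'(0)=0$. Set $\Psi_b(t)=e^{t/p}f(e^t)$ (Emden--Fowler transformation), which solves $\Psi''-\frac{1}{p^2}\Psi+|\Psi|^{2p}\Psi=-\lambda e^{2t}\Psi+e^{4t}\Psi$ and satisfies $\Psi_b(t)=be^{t/p}\left[1-\frac{p(\lambda+b^{2p})}{4(p+1)}e^{2t}+O(e^{4t})\right]$ as $t\to-\infty$. Let $\Theta_h(t)=\dfrac{e^{t/p}}{(1+\alpha_pe^{2t})^{1/p}}$ with $\alpha_p=\frac{p^2}{4(1+p)}$, the positive homoclinic solution of $\Theta''-\frac1{p^2}\Theta+|\Theta|^{2p}\Theta=0$. *)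

theory Defs
  imports "HOL-Analysis.Analysis"
begin

definition dim_p :: "real \<Rightarrow> real" where
  "dim_p p = 2 + 2 / p"

definition radial_sol :: "real \<Rightarrow> real \<Rightarrow> real \<Rightarrow> (real \<Rightarrow> real) \<Rightarrow> bool" where
  "radial_sol p lam b f \<longleftrightarrow>
     f 0 = b \<and>
     (f has_real_derivative 0) (at 0 within {0..}) \<and>
     (\<exists>f1 f2. \<forall>r>0.
        (f has_real_derivative f1 r) (at r) \<and>
        (f1 has_real_derivative f2 r) (at r) \<and>
        f2 r + (dim_p p - 1) / r * f1 r - r\<^sup>2 * f r + lam * f r
          + \<bar>f r\<bar> powr (2 * p) * f r = 0)"

definition Psi :: "real \<Rightarrow> (real \<Rightarrow> real) \<Rightarrow> real \<Rightarrow> real" where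
  "Psi p f t = exp (t / p) * f (exp t)"

definition alpha_p :: "real \<Rightarrow> real" where
  "alpha_p p = p\<^sup>2 / (4 * (1 + p))"

definition Theta_h :: "real \<Rightarrow> real \<Rightarrow> real" where
  "Theta_h p t = exp (t / p) / (1 + alpha_p p * exp (2 * t)) powr (1 / p)"

end

theory Submission
  imports Defs
begin


lemma powr_diff_le:
  fixes x y q :: real
  assumes "0 \<le> y" "y \<le> x" "1 \<le> q"
  shows "x powr q - y powr q \<le> q * x powr (q - 1) * (x - y)"
proof (cases "y = x")
  case True then show ?thesis by simp
next
  case False
  then have yx: "y < x" using assms by simp
  show ?thesis
  proof (cases "y = 0")
    case True
    have "x powr q = x powr (q-1) * x" using yx True
      using powr_add[of x "q-1" 1] by simp
    moreover have "x powr (q-1) * x \<le> q * x powr (q-1) * x"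
      using yx True assms(3) by (simp add: mult_right_mono)
    ultimately show ?thesis using True assms(3) by simp
  next
    case False
    then have y0: "0 < y" using assms by simp
    have "\<And>s. y \<le> s \<Longrightarrow> s \<le> x \<Longrightarrow> ((\<lambda>s. s powr q) has_real_derivative q * s powr (q - 1)) (at s)"
      using y0 by (auto intro!: derivative_eq_intros)
    from MVT2[OF yx this] obtain z where z: "y < z" "z < x"
      "x powr q - y powr q = (x - y) * (q * z powr (q - 1))" by blast
    have "z powr (q-1) \<le> x powr (q-1)"
      using z y0 assms by (intro powr_mono2) auto
    then have "(x - y) * (q * z powr (q - 1)) \<le> (x - y) * (q * x powr (q - 1))"
      using yx assms by (intro mult_left_mono) auto
    then show ?thesis using z by (simp add: algebra_simps)
  qed
qed

lemma N_nonneg: "0 \<le> (x::real) \<Longrightarrow> 0 < p \<Longrightarrow> \<bar>x\<bar> powr (2*p) * x = x powr (2*p+1)"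
  by (cases "x = 0") (auto simp: powr_add)

lemma N_lip:
  fixes x y p :: real
  assumes p: "0 < p"
  shows "\<bar>\<bar>x\<bar> powr (2*p) * x - \<bar>y\<bar> powr (2*p) * y\<bar> \<le> (2*p+1) * (max \<bar>x\<bar> \<bar>y\<bar>) powr (2*p) * \<bar>x - y\<bar>"
proof -
  have same: "\<bar>u powr (2*p+1) - z powr (2*p+1)\<bar> \<le> (2*p+1) * (max u z) powr (2*p) * \<bar>u - z\<bar>"
    if "0 \<le> u" "0 \<le> z" for u z
  proof (cases "z \<le> u")
    case True
    have "u powr (2*p+1) - z powr (2*p+1) \<le> (2*p+1) * u powr (2*p) * (u - z)"
      using powr_diff_le[of z u "2*p+1"] that True p by simp
    moreover have "z powr (2*p+1) \<le> u powr (2*p+1)" using that True p by (intro powr_mono2) auto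
    ultimately show ?thesis using True by (simp add: max_def)
  next
    case False
    have "z powr (2*p+1) - u powr (2*p+1) \<le> (2*p+1) * z powr (2*p) * (z - u)"
      using powr_diff_le[of u z "2*p+1"] that False p by simp
    moreover have "u powr (2*p+1) \<le> z powr (2*p+1)" using that False p by (intro powr_mono2) auto
    ultimately show ?thesis using False by (simp add: max_def)
  qed
  have opp: "\<bar>u powr (2*p+1) + z powr (2*p+1)\<bar> \<le> (2*p+1) * (max u z) powr (2*p) * \<bar>u + z\<bar>"
    if "0 \<le> u" "0 \<le> z" for u z
  proof -
    have "u powr (2*p+1) = u powr (2*p) * u" using that p by (simp add: N_nonneg[symmetric])
    also have "\<dots> \<le> (max u z) powr (2*p) * u" using that p by (intro mult_right_mono powr_mono2) auto
    finally have 1: "u powr (2*p+1) \<le> (max u z) powr (2*p) * u" .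
    have "z powr (2*p+1) = z powr (2*p) * z" using that p by (simp add: N_nonneg[symmetric])
    also have "\<dots> \<le> (max u z) powr (2*p) * z" using that p by (intro mult_right_mono powr_mono2) auto
    finally have 2: "z powr (2*p+1) \<le> (max u z) powr (2*p) * z" .
    have "(max u z) powr (2*p) * (u + z) \<le> (2*p+1) * (max u z) powr (2*p) * (u + z)"
      using that p by (intro mult_right_mono) (auto intro: mult_nonneg_nonneg simp: algebra_simps)
    then show ?thesis using 1 2 that by (simp add: algebra_simps)
  qed
  have Nneg: "\<bar>x\<bar> powr (2*p) * x = - ((-x) powr (2*p+1))" if "x \<le> 0" for x
    using N_nonneg[of "-x" p] that p by simp
  show ?thesis
  proof (cases "0 \<le> x")
    case x: True
    have ex: "\<bar>x\<bar> powr (2*p) * x = x powr (2*p+1)" using N_nonneg[of x p] x p by simp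
    show ?thesis
    proof (cases "0 \<le> y")
      case True
      have ey: "\<bar>y\<bar> powr (2*p) * y = y powr (2*p+1)" using N_nonneg[of y p] True p by simp
      show ?thesis unfolding ex ey using same[of x y] x True by simp
    next
      case False
      have ey: "\<bar>y\<bar> powr (2*p) * y = - ((-y) powr (2*p+1))" using Nneg[of y] False by simp
      have "\<bar>x powr (2*p+1) + (-y) powr (2*p+1)\<bar> \<le> (2*p+1) * (max x (-y)) powr (2*p) * \<bar>x + (-y)\<bar>"
        using opp[of x "-y"] x False by simp
      then show ?thesis unfolding ex ey using x False by simp
    qed
  next
    case x: False
    have ex: "\<bar>x\<bar> powr (2*p) * x = - ((-x) powr (2*p+1))" using Nneg[of x] x by simp
    show ?thesis
    proof (cases "0 \<le> y")
      case True
      have ey: "\<bar>y\<bar> powr (2*p) * y = y powr (2*p+1)" using N_nonneg[of y p] True p by simp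
      have "\<bar>(-x) powr (2*p+1) + y powr (2*p+1)\<bar> \<le> (2*p+1) * (max (-x) y) powr (2*p) * \<bar>(-x) + y\<bar>"
        using opp[of "-x" y] x True by simp
      then show ?thesis unfolding ex ey using x True by (simp add: abs_minus_commute add.commute)
    next
      case False
      have ey: "\<bar>y\<bar> powr (2*p) * y = - ((-y) powr (2*p+1))" using Nneg[of y] False by simp
      have "\<bar>(-x) powr (2*p+1) - (-y) powr (2*p+1)\<bar> \<le> (2*p+1) * (max (-x) (-y)) powr (2*p) * \<bar>(-x) - (-y)\<bar>"
        using same[of "-x" "-y"] x False by simp
      then show ?thesis unfolding ex ey using x False by (simp add: abs_minus_commute)
    qed
  qed
qed

lemma powr_sum_le:
  fixes u z p :: real
  assumes "0 \<le> u" "0 \<le> z" "0 < p" "p \<le> 1"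
  shows "(u + z) powr (2*p) \<le> 4 * (u powr (2*p) + z powr (2*p))"
proof -
  define m where "m = max u z"
  have m0: "0 \<le> m" using assms m_def by simp
  have "(u + z) powr (2*p) \<le> (2*m) powr (2*p)"
    using assms m_def by (intro powr_mono2) auto
  also have "\<dots> = 2 powr (2*p) * m powr (2*p)" using m0 by (simp add: powr_mult)
  also have "\<dots> \<le> 4 * m powr (2*p)"
  proof -
    have "2 powr (2*p) \<le> (2::real) powr 2" using assms by (intro powr_mono) auto
    then have "2 powr (2*p) \<le> (4::real)" by simp
    then show ?thesis by (intro mult_right_mono) auto
  qed
  also have "\<dots> \<le> 4 * (u powr (2*p) + z powr (2*p))"
    using assms by (auto simp: m_def max_def)
  finally show ?thesis .
qed

lemma N_est:
  fixes W v p :: real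
  assumes "0 \<le> W" "0 < p" "p \<le> 1"
  shows "\<bar>\<bar>W + v\<bar> powr (2*p) * (W + v) - \<bar>W\<bar> powr (2*p) * W\<bar> \<le> 12 * (W powr (2*p) + \<bar>v\<bar> powr (2*p)) * \<bar>v\<bar>"
proof -
  have "\<bar>\<bar>W + v\<bar> powr (2*p) * (W + v) - \<bar>W\<bar> powr (2*p) * W\<bar> \<le> (2*p+1) * (max \<bar>W+v\<bar> \<bar>W\<bar>) powr (2*p) * \<bar>(W + v) - W\<bar>"
    by (rule N_lip) (use assms in auto)
  also have "\<dots> \<le> 3 * (W + \<bar>v\<bar>) powr (2*p) * \<bar>v\<bar>"
    using assms by (intro mult_mono powr_mono2) auto
  also have "\<dots> \<le> 3 * (4 * (W powr (2*p) + \<bar>v\<bar> powr (2*p))) * \<bar>v\<bar>"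
    using powr_sum_le[of W "\<bar>v\<bar>" p] assms by (intro mult_mono) auto
  finally show ?thesis by simp
qed



definition WW :: "real \<Rightarrow> real \<Rightarrow> real" where
  "WW p \<rho> = (1 + alpha_p p * \<rho>\<^sup>2) powr (-1/p)"
definition WW1 :: "real \<Rightarrow> real \<Rightarrow> real" where
  "WW1 p \<rho> = -(2 * alpha_p p / p) * \<rho> * (1 + alpha_p p * \<rho>\<^sup>2) powr (-1/p - 1)"

lemma alpha_pos: "0 < p \<Longrightarrow> 0 < alpha_p p"
  by (simp add: alpha_p_def)

lemma s_pos: "0 < p \<Longrightarrow> 0 < 1 + alpha_p p * \<rho>\<^sup>2"
  using alpha_pos[of p] by (simp add: add_pos_nonneg)

lemma WW_deriv: "0 < p \<Longrightarrow> (WW p has_real_derivative WW1 p \<rho>) (at \<rho>)"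
  unfolding WW_def WW1_def
  apply (rule derivative_eq_intros refl | use s_pos in force)+
  done

lemma WW_pos: "0 < p \<Longrightarrow> 0 < WW p \<rho>"
  unfolding WW_def using s_pos[of p \<rho>] by simp

lemma WW1_deriv:
  assumes p: "0 < p" and r: "\<rho> \<noteq> 0"
  shows "(WW1 p has_real_derivative (-(dim_p p - 1)/\<rho> * WW1 p \<rho> - \<bar>WW p \<rho>\<bar> powr (2*p) * WW p \<rho>)) (at \<rho>)"
proof -
  define s where "s = 1 + alpha_p p * \<rho>\<^sup>2"
  define A where "A = s powr (-1/p - 2)"
  have s0: "0 < s" using s_pos[OF p] s_def by simp
  have ex: "-1/p - 1 = 1 + (-1/p - 2)" by simp
  have e1: "s powr (-1/p - 1) = s * A"
  proof -
    have "s powr (-1/p - 1) = s powr (1 + (-1/p - 2))" by (rule arg_cong[where f="\<lambda>e. s powr e"]) simp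
    also have "\<dots> = s powr 1 * s powr (-1/p-2)" by (rule powr_add)
    also have "\<dots> = s * A" using s0 A_def by simp
    finally show ?thesis .
  qed
  have e2: "s powr (-1/p - 1 - 1) = A" unfolding A_def by (simp add: algebra_simps)
  have e3: "\<bar>WW p \<rho>\<bar> powr (2*p) * WW p \<rho> = A"
  proof -
    have "\<bar>WW p \<rho>\<bar> powr (2*p) = s powr (-2)" using s0 p
      unfolding WW_def s_def[symmetric] by (simp add: powr_powr)
    then show ?thesis unfolding A_def WW_def s_def[symmetric] using s0
      by (simp add: powr_add[symmetric]) (rule arg_cong[where f="\<lambda>e. s powr e"]; simp)
  qed
  show ?thesis
    unfolding WW1_def
    apply (rule derivative_eq_intros refl | use s_pos[OF p] in force)+
    unfolding s_def[symmetric] e1 e2 e3[unfolded WW1_def] dim_p_def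
    using p r s0
    apply (simp add: s_def field_simps)
    using alpha_p_def[of p] p by (simp add: field_simps power2_eq_square) algebra
qed

lemma WW_le1: "0 < p \<Longrightarrow> WW p \<rho> \<le> 1"
proof -
  assume p: "0 < p"
  have "1 \<le> 1 + alpha_p p * \<rho>\<^sup>2" using alpha_pos[OF p] by simp
  then have "(1 + alpha_p p * \<rho>\<^sup>2) powr (-1/p) \<le> 1 powr (-1/p)"
    using p by (intro powr_mono2') auto
  then show ?thesis unfolding WW_def by simp
qed

lemma WW_pow: "0 < p \<Longrightarrow> WW p \<rho> powr (2*p) = 1 / (1 + alpha_p p * \<rho>\<^sup>2)\<^sup>2"
proof -
  assume p: "0 < p"
  define s where "s = 1 + alpha_p p * \<rho>\<^sup>2"
  have s0: "0 < s" using s_pos[OF p] s_def by simp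
  have "WW p \<rho> powr (2*p) = s powr (-1/p * (2*p))" unfolding WW_def s_def[symmetric] by (simp add: powr_powr)
  also have "\<dots> = s powr (- 2)" using p by simp
  also have "\<dots> = 1 / s\<^sup>2" using s0 by (simp add: powr_minus_divide powr_realpow)
  finally show ?thesis unfolding s_def .
qed

lemma WW_0: "WW p 0 = 1" unfolding WW_def by simp

lemma WW_cont: "0 < p \<Longrightarrow> isCont (WW p) x"
  using WW_deriv DERIV_isCont by blast

lemma WW1_cont: "0 < p \<Longrightarrow> isCont (\<lambda>\<rho>. \<rho> * WW1 p \<rho>) x"
proof -
  assume p: "0 < p"
  have "1 + alpha_p p * x\<^sup>2 \<noteq> 0" using s_pos[OF p, of x] by simp
  then show ?thesis unfolding WW1_def by (intro continuous_intros) auto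
qed

lemma Theta_eq: "0 < p \<Longrightarrow> Theta_h p t = exp (t/p) * WW p (exp t)"
  unfolding Theta_h_def WW_def
  using s_pos[of p "exp t"]
  by (simp add: powr_minus_divide divide_inverse power2_eq_square exp_add[symmetric])

lemma Theta_deriv: "0 < p \<Longrightarrow>
  (Theta_h p has_real_derivative exp (t/p) * (WW p (exp t) / p + exp t * WW1 p (exp t))) (at t)"
proof -
  assume p: "0 < p"
  have "((\<lambda>t. exp (t/p) * WW p (exp t)) has_real_derivative exp (t/p) * (WW p (exp t) / p + exp t * WW1 p (exp t))) (at t)"
  proof -
    have c: "((\<lambda>t. WW p (exp t)) has_real_derivative WW1 p (exp t) * exp t) (at t)"
      using DERIV_chain2[OF WW_deriv[OF p] DERIV_exp] by simp
    have e: "((\<lambda>t. exp (t/p)) has_real_derivative exp (t/p) * (1/p)) (at t)"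
      using p by (auto intro!: derivative_eq_intros)
    show ?thesis using DERIV_mult[OF e c] by (simp add: algebra_simps)
  qed
  moreover have "Theta_h p = (\<lambda>t. exp (t/p) * WW p (exp t))" using Theta_eq[OF p] by auto
  ultimately show ?thesis by simp
qed



lemma barrier:
  fixes v y P v' y' P' :: "real \<Rightarrow> real" and c xs R pt :: real
  assumes xsR: "xs < R" and c: "0 < c"
    and dv: "\<And>x. x \<in> {xs..R} \<Longrightarrow> (v has_real_derivative v' x) (at x)"
    and dy: "\<And>x. x \<in> {xs..R} \<Longrightarrow> (y has_real_derivative y' x) (at x)"
    and dP: "\<And>x. x \<in> {xs..R} \<Longrightarrow> (P has_real_derivative P' x) (at x)"
    and start: "\<bar>v xs\<bar> + c * \<bar>y xs\<bar> < P xs"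
    and step: "\<And>x s1 s2. x \<in> {xs<..R} \<Longrightarrow> \<bar>v x\<bar> + c * \<bar>y x\<bar> = P x \<Longrightarrow> \<bar>s1\<bar> = 1 \<Longrightarrow> \<bar>s2\<bar> = 1
        \<Longrightarrow> s1 * v x = \<bar>v x\<bar> \<Longrightarrow> s2 * y x = \<bar>y x\<bar> \<Longrightarrow> s1 * v' x + s2 * c * y' x < P' x"
    and pt: "pt \<in> {xs..R}"
  shows "\<bar>v pt\<bar> + c * \<bar>y pt\<bar> < P pt"
proof (rule ccontr)
  assume neg: "\<not> ?thesis"
  define h where "h = (\<lambda>x. \<bar>v x\<bar> + c * \<bar>y x\<bar> - P x)"
  have ch: "continuous_on {xs..R} h"
  proof -
    have "isCont h x" if "x \<in> {xs..R}" for x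
      unfolding h_def using DERIV_isCont[OF dv[OF that]] DERIV_isCont[OF dy[OF that]] DERIV_isCont[OF dP[OF that]]
      by (intro continuous_intros) auto
    then show ?thesis by (intro continuous_at_imp_continuous_on) auto
  qed
  define S where "S = {xs..R} \<inter> h -` {0..}"
  have clS: "closed S" unfolding S_def by (rule continuous_closed_preimage[OF ch]) auto
  have ptS: "pt \<in> S" using neg pt unfolding S_def h_def by auto
  have bdd: "bdd_below S" unfolding S_def by (rule bdd_belowI[of _ xs]) auto
  define x1 where "x1 = Inf S"
  have x1S: "x1 \<in> S" unfolding x1_def using closed_contains_Inf[OF _ bdd clS] ptS by auto
  have hxs: "h xs < 0" using start unfolding h_def by simp
  have x1r: "xs \<le> x1" "x1 \<le> R" using x1S unfolding S_def by auto
  have x1xs: "xs < x1" using x1S hxs x1r unfolding S_def by (cases "x1 = xs") auto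
  have below: "h x < 0" if "xs \<le> x" "x < x1" for x
  proof (rule ccontr)
    assume "\<not> h x < 0"
    then have "x \<in> S" using that x1r unfolding S_def by auto
    then have "x1 \<le> x" unfolding x1_def using bdd by (rule cInf_lower)
    then show False using that by simp
  qed
  have hx1: "h x1 = 0"
  proof -
    have "0 \<le> h x1" using x1S unfolding S_def by auto
    moreover have "continuous_on {xs..x1} h" by (rule continuous_on_subset[OF ch]) (use x1r in auto)
    ultimately obtain z where z: "xs \<le> z" "z \<le> x1" "h z = 0"
      using IVT'[of h xs 0 x1] hxs x1r by auto
    have "z = x1" using below[of z] z by force
    then show ?thesis using z by simp
  qed
  define s1 where "s1 = (if 0 \<le> v x1 then 1 else -1::real)"
  define s2 where "s2 = (if 0 \<le> y x1 then 1 else -1::real)"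
  have s1: "\<bar>s1\<bar> = 1" "s1 * v x1 = \<bar>v x1\<bar>" unfolding s1_def by auto
  have s2: "\<bar>s2\<bar> = 1" "s2 * y x1 = \<bar>y x1\<bar>" unfolding s2_def by auto
  define g where "g = (\<lambda>x. s1 * v x + s2 * c * y x - P x)"
  have x1I: "x1 \<in> {xs..R}" "x1 \<in> {xs<..R}" using x1xs x1r by auto
  have dg: "(g has_real_derivative (s1 * v' x1 + s2 * c * y' x1 - P' x1)) (at x1)"
    unfolding g_def using dv[OF x1I(1)] dy[OF x1I(1)] dP[OF x1I(1)]
    by (auto intro!: derivative_eq_intros)
  have eq: "\<bar>v x1\<bar> + c * \<bar>y x1\<bar> = P x1" using hx1 unfolding h_def by simp
  have neg': "s1 * v' x1 + s2 * c * y' x1 - P' x1 < 0"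
    using step[OF x1I(2) eq s1(1) s2(1) s1(2) s2(2)] by simp
  obtain d where d: "d > 0" "\<And>hh. hh > 0 \<Longrightarrow> hh < d \<Longrightarrow> g x1 < g (x1 - hh)"
    using DERIV_neg_dec_left[OF dg neg'] by blast
  define m where "m = min d (x1 - xs)"
  define hh where "hh = m / 2"
  have m1: "m \<le> x1 - xs" "m \<le> d" "0 < m" using d(1) x1xs unfolding m_def by auto
  have hh: "hh > 0" "hh < d" "xs \<le> x1 - hh" "x1 - hh < x1" using m1 unfolding hh_def by linarith+
  have "g x1 = 0" using s1 s2 eq unfolding g_def by (simp add: algebra_simps)
  then have gpos: "0 < g (x1 - hh)" using d(2)[OF hh(1,2)] by simp
  have "g (x1 - hh) \<le> h (x1 - hh)"
  proof -
    have "s1 * v (x1 - hh) \<le> \<bar>s1 * v (x1 - hh)\<bar>" by (rule abs_ge_self)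
    also have "\<dots> = \<bar>v (x1 - hh)\<bar>" using s1(1) by (simp add: abs_mult)
    finally have A1: "s1 * v (x1 - hh) \<le> \<bar>v (x1 - hh)\<bar>" .
    have "s2 * c * y (x1 - hh) \<le> \<bar>s2 * c * y (x1 - hh)\<bar>" by (rule abs_ge_self)
    also have "\<dots> = c * \<bar>y (x1 - hh)\<bar>" using s2(1) c by (simp add: abs_mult)
    finally have A2: "s2 * c * y (x1 - hh) \<le> c * \<bar>y (x1 - hh)\<bar>" .
    show ?thesis using A1 A2 unfolding g_def h_def by simp
  qed
  then show False using below[OF hh(3,4)] gpos by simp
qed



lemma near0:
  fixes f f1 :: "real \<Rightarrow> real" and p b \<beta> \<eta> x :: real
  assumes p: "0 < p" "p \<le> 1" and b: "0 < b" and bt: "0 < \<beta>"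
    and f0: "f 0 = b" and fc0: "continuous (at 0 within {0..}) f"
    and fd: "\<And>r. r > 0 \<Longrightarrow> (f has_real_derivative f1 r) (at r)"
    and eta: "0 < \<eta>" and x: "0 < x"
  shows "\<exists>xs. 0 < xs \<and> xs < x \<and>
     \<bar>f (xs/\<beta>) / b - WW p xs\<bar> + (p/2) * \<bar>xs * (f1 (xs/\<beta>) / (b*\<beta>) - WW1 p xs)\<bar> < \<eta>"
proof -
  have e4: "0 < \<eta>*b/4" using eta b by simp
  obtain d1 where d1: "d1 > 0" "\<And>r. r \<in> {0..} \<Longrightarrow> dist r 0 < d1 \<Longrightarrow> dist (f r) (f 0) < \<eta>*b/4"
    using fc0[unfolded continuous_within_eps_delta] e4 by metis
  obtain d2 where d2: "d2 > 0" "\<And>r. dist r 0 < d2 \<Longrightarrow> dist (WW p r) (WW p 0) < \<eta>/4"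
    using WW_cont[OF p(1), of 0, unfolded continuous_at_eps_delta] eta by (metis divide_pos_pos zero_less_numeral)
  obtain d3 where d3: "d3 > 0" "\<And>r. dist r 0 < d3 \<Longrightarrow> dist (r * WW1 p r) (0 * WW1 p 0) < \<eta>/4"
    using WW1_cont[OF p(1), of 0, unfolded continuous_at_eps_delta] eta by (metis divide_pos_pos zero_less_numeral)
  define m where "m = min d1 (min (d2/\<beta>) (min (d3/\<beta>) (x/\<beta>)))"
  define r where "r = m / 2"
  have m: "0 < m" "m \<le> d1" "m \<le> d2/\<beta>" "m \<le> d3/\<beta>" "m \<le> x/\<beta>"
    using d1 d2 d3 x bt unfolding m_def by auto
  have r: "0 < r" "r < d1" "r < d2/\<beta>" "r < d3/\<beta>" "r < x/\<beta>" using m unfolding r_def by linarith+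
  have cont: "continuous_on {0..r} f"
    unfolding continuous_on_eq_continuous_within
  proof
    fix t assume t: "t \<in> {0..r}"
    show "continuous (at t within {0..r}) f"
    proof (cases "t = 0")
      case True then show ?thesis using continuous_within_subset[OF fc0] by auto
    next
      case False
      then have "t > 0" using t by simp
      then show ?thesis using DERIV_isCont[OF fd] continuous_at_imp_continuous_within by blast
    qed
  qed
  have diff: "\<And>t. 0 < t \<Longrightarrow> t < r \<Longrightarrow> f differentiable at t"
    using fd real_differentiable_def by blast
  obtain l \<xi> where xi: "0 < \<xi>" "\<xi> < r" "(f has_real_derivative l) (at \<xi>)" "f r - f 0 = (r - 0) * l"
    using MVT[OF r(1) cont diff] by blast
  have l: "l = f1 \<xi>" using DERIV_unique[OF xi(3) fd[OF xi(1)]] .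
  define xs where "xs = \<beta> * \<xi>"
  have bxr: "xs < \<beta> * r" using xi bt unfolding xs_def by simp
  have r': "\<beta> * r < d2" "\<beta> * r < d3" "\<beta> * r < x" using r bt by (auto simp: field_simps)
  have xsa: "xs < x" "xs < d2" "xs < d3" using bxr r' by linarith+
  have xsb: "0 < xs" "xs/\<beta> = \<xi>" using xi bt unfolding xs_def by auto
  note xs = xsb(1) xsa xsb(2)
  have A1: "\<bar>f \<xi> - b\<bar> < \<eta>*b/4" using d1(2)[of \<xi>] xi r f0 by (simp add: dist_real_def)
  have A2: "\<bar>f r - b\<bar> < \<eta>*b/4" using d1(2)[of r] r f0 by (simp add: dist_real_def)
  have A3: "\<bar>WW p xs - 1\<bar> < \<eta>/4" using d2(2)[of xs] xs by (simp add: dist_real_def WW_0)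
  have A4: "\<bar>xs * WW1 p xs\<bar> < \<eta>/4" using d3(2)[of xs] xs by (simp add: dist_real_def)
  have B1: "\<bar>\<xi> * f1 \<xi>\<bar> \<le> \<bar>f r - b\<bar>"
  proof -
    have "\<bar>\<xi> * f1 \<xi>\<bar> \<le> r * \<bar>f1 \<xi>\<bar>" using xi by (simp add: abs_mult mult_right_mono)
    also have "\<dots> = \<bar>f r - b\<bar>" using xi(4) l f0 r(1) by (simp add: abs_mult)
    finally show ?thesis .
  qed
  have C1: "\<bar>f (xs/\<beta>) / b - WW p xs\<bar> < \<eta>/2"
  proof -
    have "f (xs/\<beta>) / b - WW p xs = (f \<xi> - b)/b - (WW p xs - 1)" using xs b by (simp add: field_simps)
    moreover have "\<bar>(f \<xi> - b)/b - (WW p xs - 1)\<bar> \<le> \<bar>(f \<xi> - b)/b\<bar> + \<bar>WW p xs - 1\<bar>" by (rule abs_triangle_ineq4)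
    ultimately have "\<bar>f (xs/\<beta>) / b - WW p xs\<bar> \<le> \<bar>f \<xi> - b\<bar>/b + \<bar>WW p xs - 1\<bar>" using b by simp
    moreover have "\<bar>f \<xi> - b\<bar>/b < \<eta>/4" using A1 b by (simp add: field_simps)
    ultimately show ?thesis using A3 by linarith
  qed
  have C2: "\<bar>xs * (f1 (xs/\<beta>) / (b*\<beta>) - WW1 p xs)\<bar> < \<eta>/2"
  proof -
    have "xs * (f1 (xs/\<beta>) / (b*\<beta>) - WW1 p xs) = (\<xi> * f1 \<xi>)/b - xs * WW1 p xs"
      using xs b bt unfolding xs_def by (simp add: field_simps)
    moreover have "\<bar>(\<xi> * f1 \<xi>)/b - xs * WW1 p xs\<bar> \<le> \<bar>(\<xi> * f1 \<xi>)/b\<bar> + \<bar>xs * WW1 p xs\<bar>" by (rule abs_triangle_ineq4)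
    ultimately have "\<bar>xs * (f1 (xs/\<beta>) / (b*\<beta>) - WW1 p xs)\<bar> \<le> \<bar>\<xi> * f1 \<xi>\<bar>/b + \<bar>xs * WW1 p xs\<bar>" using b by simp
    moreover have "\<bar>\<xi> * f1 \<xi>\<bar>/b < \<eta>/4" using B1 A2 b by (simp add: field_simps)
    ultimately show ?thesis using A4 by linarith
  qed
  have "(p/2) * \<bar>xs * (f1 (xs/\<beta>) / (b*\<beta>) - WW1 p xs)\<bar> \<le> \<bar>xs * (f1 (xs/\<beta>) / (b*\<beta>) - WW1 p xs)\<bar>"
  proof -
    have "p/2 \<le> 1" using p by simp
    then show ?thesis by (intro mult_left_le_one_le) (use p in auto)
  qed
  then show ?thesis using C1 C2 xs by (intro exI[of _ xs]) auto
qed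



lemma main_est:
  fixes p lam b \<beta> \<epsilon> R \<delta> x :: real and f f1 f2 :: "real \<Rightarrow> real"
  assumes p: "0 < p" "p \<le> 1" and b: "0 < b" and bt: "\<beta> = b powr p" and eps: "\<epsilon> = 1/\<beta>\<^sup>2"
    and f0: "f 0 = b" and fc0: "continuous (at 0 within {0..}) f"
    and fd: "\<And>r. r > 0 \<Longrightarrow> (f has_real_derivative f1 r) (at r)"
    and f1d: "\<And>r. r > 0 \<Longrightarrow> (f1 has_real_derivative f2 r) (at r)"
    and feq: "\<And>r. r > 0 \<Longrightarrow> f2 r + (dim_p p - 1) / r * f1 r - r\<^sup>2 * f r + lam * f r
          + \<bar>f r\<bar> powr (2 * p) * f r = 0"
    and R: "0 < R" and dl: "\<delta> \<le> 1" "\<delta> powr (2*p) * R\<^sup>2 \<le> 1"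
    and dom: "exp (3*p*(1/alpha_p p + 1)) * (\<epsilon> + (1+\<bar>lam\<bar>)*p*(\<epsilon>\<^sup>2*R^4 + \<epsilon>*R\<^sup>2)) \<le> \<delta>"
    and x: "0 < x" "x \<le> R"
  shows "\<bar>f (x/\<beta>)/b - WW p x\<bar> \<le> \<delta> \<and> \<bar>x*(f1 (x/\<beta>)/(b*\<beta>) - WW1 p x)\<bar> \<le> 2/p*\<delta>"
proof -
  have bt0: "0 < \<beta>" using bt b by simp
  have e0: "0 < \<epsilon>" using eps bt0 by simp
  have bb: "\<beta>\<^sup>2 = b powr (2*p)" using bt b by (simp add: power2_eq_square powr_add[symmetric])
  define \<alpha> where "\<alpha> = alpha_p p"
  have a0: "0 < \<alpha>" using alpha_pos[OF p(1)] \<alpha>_def by simp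
  define \<kappa> where "\<kappa> = (1+\<bar>lam\<bar>)*p"
  have k0: "0 < \<kappa>" using p unfolding \<kappa>_def by (simp add: add_pos_nonneg)
  define D2 where "D2 = \<delta> powr (2*p)"
  have D20: "0 \<le> D2" unfolding D2_def by simp
  define w where "w z = f (z/\<beta>) / b" for z
  define w1 where "w1 z = f1 (z/\<beta>) / (b*\<beta>)" for z
  define w2 where "w2 z = f2 (z/\<beta>) / (b*\<beta>\<^sup>2)" for z
  have dw: "(w has_real_derivative w1 z) (at z)" if "0 < z" for z
  proof -
    have "((\<lambda>z. f (z/\<beta>)) has_real_derivative f1 (z/\<beta>) * (1/\<beta>)) (at z)"
    proof -
      have h1: "(f has_real_derivative f1 (z/\<beta>)) (at (z/\<beta>))" using fd[of "z/\<beta>"] that bt0 by simp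
      have h2: "((\<lambda>z. z/\<beta>) has_real_derivative 1/\<beta>) (at z)" using bt0 by (auto intro!: derivative_eq_intros)
      show ?thesis using DERIV_chain2[OF h1 h2] by simp
    qed
    then show ?thesis unfolding w_def w1_def using DERIV_cdivide[where c=b] by (fastforce simp: field_simps)
  qed
  have dw1: "(w1 has_real_derivative w2 z) (at z)" if "0 < z" for z
  proof -
    have "((\<lambda>z. f1 (z/\<beta>)) has_real_derivative f2 (z/\<beta>) * (1/\<beta>)) (at z)"
    proof -
      have h1: "(f1 has_real_derivative f2 (z/\<beta>)) (at (z/\<beta>))" using f1d[of "z/\<beta>"] that bt0 by simp
      have h2: "((\<lambda>z. z/\<beta>) has_real_derivative 1/\<beta>) (at z)" using bt0 by (auto intro!: derivative_eq_intros)
      show ?thesis using DERIV_chain2[OF h1 h2] by simp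
    qed
    then show ?thesis unfolding w1_def w2_def using DERIV_cdivide[where c="b*\<beta>"] by (fastforce simp: field_simps power2_eq_square)
  qed
  have weq: "w2 z = -(dim_p p - 1)/z * w1 z + \<epsilon>\<^sup>2*z\<^sup>2*w z - lam*\<epsilon>*w z - \<bar>w z\<bar> powr (2*p) * w z"
    if "0 < z" for z
  proof -
    define r where "r = z/\<beta>"
    have r0: "0 < r" using that bt0 r_def by simp
    have fr: "f r = b * w z" unfolding w_def r_def using b by simp
    have pw: "\<bar>f r\<bar> powr (2*p) = \<beta>\<^sup>2 * \<bar>w z\<bar> powr (2*p)"
      unfolding fr bb using b by (simp add: abs_mult powr_mult)
    have e2: "f2 r = - ((dim_p p - 1) / r * f1 r) + r\<^sup>2 * f r - lam * f r - \<bar>f r\<bar> powr (2 * p) * f r"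
      using feq[OF r0] by linarith
    have "w2 z = f2 r / (b*\<beta>\<^sup>2)" unfolding w2_def r_def ..
    also have "\<dots> = - ((dim_p p - 1) / r * f1 r) / (b*\<beta>\<^sup>2) + r\<^sup>2 * f r / (b*\<beta>\<^sup>2) - lam * f r / (b*\<beta>\<^sup>2)
        - \<bar>f r\<bar> powr (2 * p) * f r / (b*\<beta>\<^sup>2)" unfolding e2 by (simp add: diff_divide_distrib add_divide_distrib)
    also have "- ((dim_p p - 1) / r * f1 r) / (b*\<beta>\<^sup>2) = -(dim_p p - 1)/z * w1 z"
      unfolding w1_def r_def using b bt0 that by (simp add: field_simps power2_eq_square)
    also have "r\<^sup>2 * f r / (b*\<beta>\<^sup>2) = \<epsilon>\<^sup>2*z\<^sup>2*w z"
    proof -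
      have zr: "z = \<beta> * r" using r_def bt0 by simp
      show ?thesis unfolding fr eps zr using b bt0 by (simp add: field_simps power2_eq_square)
    qed
    also have "lam * f r / (b*\<beta>\<^sup>2) = lam*\<epsilon>*w z"
      unfolding fr eps using b bt0 by (simp add: field_simps power2_eq_square)
    also have "\<bar>f r\<bar> powr (2 * p) * f r / (b*\<beta>\<^sup>2) = \<bar>w z\<bar> powr (2*p) * w z"
      unfolding pw unfolding fr using b bt0 by (simp add: field_simps power2_eq_square)
    finally show ?thesis .
  qed
  define v where "v z = w z - WW p z" for z
  define y where "y z = z * (w1 z - WW1 p z)" for z
  define W2 where "W2 z = -(dim_p p - 1)/z * WW1 p z - \<bar>WW p z\<bar> powr (2*p) * WW p z" for z
  have dv: "(v has_real_derivative (w1 z - WW1 p z)) (at z)" if "0 < z" for z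
    unfolding v_def using dw[OF that] WW_deriv[OF p(1), of z] by (auto intro!: derivative_eq_intros)
  have dy: "(y has_real_derivative ((w1 z - WW1 p z) + z * (w2 z - W2 z))) (at z)" if "0 < z" for z
    unfolding y_def W2_def using dw1[OF that] WW1_deriv[OF p(1), of z] that
    by (auto intro!: derivative_eq_intros simp: algebra_simps)
  define \<Lambda> where "\<Lambda> z = 3*p*z\<^sup>2*(1/(1+\<alpha>*z\<^sup>2) + D2)" for z
  define \<Lambda>' where "\<Lambda>' z = 6*p*z*(1/(1+\<alpha>*z\<^sup>2)\<^sup>2 + D2)" for z
  define P where "P z = \<epsilon> + \<kappa>*(\<epsilon>\<^sup>2*z^4 + \<epsilon>*z\<^sup>2)" for z
  define P' where "P' z = \<kappa>*(4*\<epsilon>\<^sup>2*z^3 + 2*\<epsilon>*z)" for z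
  define \<Phi> where "\<Phi> z = exp (\<Lambda> z) * P z" for z
  define \<Phi>' where "\<Phi>' z = exp (\<Lambda> z) * (\<Lambda>' z * P z + P' z)" for z
  have sp: "0 < 1 + \<alpha>*z\<^sup>2" for z using a0 by (simp add: add_pos_nonneg)
  have d\<Lambda>: "(\<Lambda> has_real_derivative \<Lambda>' z) (at z)" for z
    unfolding \<Lambda>_def
    apply (rule derivative_eq_intros refl | use sp[of z] in force)+
  proof -
    define s where "s = 1+\<alpha>*z\<^sup>2"
    have s0: "s \<noteq> 0" using sp[of z] s_def by simp
    have az: "\<alpha>*z\<^sup>2 = s - 1" unfolding s_def by simp
    have "(0 * z\<^sup>2 + real 2 * (1 * z ^ (2 - Suc 0)) * (3 * p)) * (1 / (1 + \<alpha> * z\<^sup>2) + D2) +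
     ((0 * (1 + \<alpha> * z\<^sup>2) - 1 * (0 + (0 * z\<^sup>2 + real 2 * (1 * z ^ (2 - Suc 0)) * \<alpha>))) /
      ((1 + \<alpha> * z\<^sup>2) * (1 + \<alpha> * z\<^sup>2)) + 0) * (3 * p * z\<^sup>2)
      = 6*p*z*(1/s + D2) - 6*p*z*(\<alpha>*z\<^sup>2)/s\<^sup>2"
      unfolding s_def by (simp add: power2_eq_square algebra_simps)
    also have "\<dots> = 6*p*z*(1/s + D2) - 6*p*z*(s - 1)/s\<^sup>2" unfolding az ..
    also have "\<dots> = \<Lambda>' z" unfolding \<Lambda>'_def s_def[symmetric] using s0 by (simp add: field_simps power2_eq_square)
    finally show "(0 * z\<^sup>2 + real 2 * (1 * z ^ (2 - Suc 0)) * (3 * p)) * (1 / (1 + \<alpha> * z\<^sup>2) + D2) +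
     ((0 * (1 + \<alpha> * z\<^sup>2) - 1 * (0 + (0 * z\<^sup>2 + real 2 * (1 * z ^ (2 - Suc 0)) * \<alpha>))) /
      ((1 + \<alpha> * z\<^sup>2) * (1 + \<alpha> * z\<^sup>2)) + 0) * (3 * p * z\<^sup>2) = \<Lambda>' z" .
  qed
  have dP: "(P has_real_derivative P' z) (at z)" for z
    unfolding P_def P'_def by (auto intro!: derivative_eq_intros simp: algebra_simps power2_eq_square power3_eq_cube)
  have d\<Phi>: "(\<Phi> has_real_derivative \<Phi>' z) (at z)" for z
    unfolding \<Phi>_def \<Phi>'_def using d\<Lambda>[of z] dP[of z] by (auto intro!: derivative_eq_intros simp: algebra_simps)
  have \<Lambda>0: "0 \<le> \<Lambda> z" for z unfolding \<Lambda>_def using p sp[of z] D20 by simp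
  have P\<epsilon>: "\<epsilon> \<le> P z" for z unfolding P_def using k0 e0 by simp
  have \<Phi>\<epsilon>: "\<epsilon> \<le> \<Phi> z" for z
  proof -
    have "1 * \<epsilon> \<le> exp (\<Lambda> z) * P z" using \<Lambda>0[of z] P\<epsilon>[of z] e0 by (intro mult_mono) auto
    then show ?thesis unfolding \<Phi>_def by simp
  qed
  have \<Phi>le: "\<Phi> z \<le> \<delta>" if "0 < z" "z \<le> R" for z
  proof -
    have "z\<^sup>2/(1+\<alpha>*z\<^sup>2) \<le> 1/\<alpha>" using a0 sp[of z] by (simp add: field_simps)
    moreover have "D2 * z\<^sup>2 \<le> 1"
    proof -
      have "D2 * z\<^sup>2 \<le> D2 * R\<^sup>2" using that D20 by (intro mult_left_mono power_mono) auto
      then show ?thesis using dl(2) D2_def by simp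
    qed
    ultimately have "z\<^sup>2/(1+\<alpha>*z\<^sup>2) + D2*z\<^sup>2 \<le> 1/\<alpha> + 1" by linarith
    moreover have "\<Lambda> z = 3*p*(z\<^sup>2/(1+\<alpha>*z\<^sup>2) + D2*z\<^sup>2)" unfolding \<Lambda>_def by (simp add: algebra_simps)
    ultimately have "\<Lambda> z \<le> 3*p*(1/\<alpha> + 1)" using p by (simp add: mult_left_mono)
    then have "exp (\<Lambda> z) \<le> exp (3*p*(1/alpha_p p + 1))" unfolding \<alpha>_def by simp
    moreover have "P z \<le> \<epsilon> + (1+\<bar>lam\<bar>)*p*(\<epsilon>\<^sup>2*R^4 + \<epsilon>*R\<^sup>2)"
      unfolding P_def \<kappa>_def using that e0 p
      by (intro add_left_mono mult_left_mono add_mono power_mono) (auto simp: add_pos_nonneg)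
    ultimately have "\<Phi> z \<le> exp (3*p*(1/alpha_p p + 1)) * (\<epsilon> + (1+\<bar>lam\<bar>)*p*(\<epsilon>\<^sup>2*R^4 + \<epsilon>*R\<^sup>2))"
      unfolding \<Phi>_def using P\<epsilon>[of z] e0 by (intro mult_mono) auto
    then show ?thesis using dom by simp
  qed
  obtain xs where xs: "0 < xs" "xs < x"
    "\<bar>f (xs/\<beta>) / b - WW p xs\<bar> + (p/2) * \<bar>xs * (f1 (xs/\<beta>) / (b*\<beta>) - WW1 p xs)\<bar> < \<epsilon>"
    using near0[OF p b bt0 f0 fc0 fd e0 x(1)] by blast
  have start: "\<bar>v xs\<bar> + (p/2) * \<bar>y xs\<bar> < \<Phi> xs"
    using xs(3) \<Phi>\<epsilon>[of xs] unfolding v_def y_def w_def w1_def by simp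
  have c0: "0 < p/2" using p by simp
  have xsR: "xs < R" using xs x by simp
  have res: "\<bar>v x\<bar> + (p/2) * \<bar>y x\<bar> < \<Phi> x"
  proof (rule barrier[where v=v and y=y and P=\<Phi> and v'="\<lambda>z. w1 z - WW1 p z"
        and y'="\<lambda>z. (w1 z - WW1 p z) + z * (w2 z - W2 z)" and P'=\<Phi>' and c="p/2" and xs=xs and R=R and pt=x,
        OF xsR c0 _ _ _ start])
    show "(v has_real_derivative (w1 z - WW1 p z)) (at z)" if "z \<in> {xs..R}" for z
      using dv[of z] that xs by simp
    show "(y has_real_derivative ((w1 z - WW1 p z) + z * (w2 z - W2 z))) (at z)" if "z \<in> {xs..R}" for z
      using dy[of z] that xs by simp
    show "(\<Phi> has_real_derivative \<Phi>' z) (at z)" for z by (rule d\<Phi>)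
    show "x \<in> {xs..R}" using xs x by simp
  next
    fix z s1 s2 :: real
    assume z: "z \<in> {xs<..R}" and eq: "\<bar>v z\<bar> + p / 2 * \<bar>y z\<bar> = \<Phi> z"
      and s1: "\<bar>s1\<bar> = 1" "s1 * v z = \<bar>v z\<bar>" and s2: "\<bar>s2\<bar> = 1" "s2 * y z = \<bar>y z\<bar>"
    show "s1 * (w1 z - WW1 p z) + s2 * (p/2) * ((w1 z - WW1 p z) + z * (w2 z - W2 z)) < \<Phi>' z"
    proof -
      have z0: "0 < z" "z \<le> R" using z xs by auto
      have vP: "\<bar>v z\<bar> \<le> \<Phi> z" using eq c0 by (smt (verit) mult_nonneg_nonneg abs_ge_zero)
      have vd: "\<bar>v z\<bar> \<le> \<delta>" using vP \<Phi>le[OF z0] by simp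
      define Wz where "Wz = WW p z"
      have W0: "0 < Wz" "Wz \<le> 1" unfolding Wz_def using WW_pos WW_le1 p by auto
      have wv: "w z = Wz + v z" unfolding v_def Wz_def by simp
      define G where "G = \<epsilon>\<^sup>2*z\<^sup>2*w z - lam*\<epsilon>*w z - (\<bar>w z\<bar> powr (2*p) * w z - \<bar>Wz\<bar> powr (2*p) * Wz)"
      have w2W2: "w2 z - W2 z = -(dim_p p - 1)/z * (w1 z - WW1 p z) + G"
        unfolding weq[OF z0(1)] W2_def G_def Wz_def using z0 by (simp add: field_simps)
      have dd: "(p/2) * (1 - (dim_p p - 1)) = -1" unfolding dim_p_def using p by (simp add: field_simps)
      have LHS: "s1 * (w1 z - WW1 p z) + s2 * (p/2) * ((w1 z - WW1 p z) + z * (w2 z - W2 z))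
          = (s1 - s2) * (w1 z - WW1 p z) + s2 * (p/2) * z * G"
      proof -
        have "s2 * (p/2) * ((w1 z - WW1 p z) + z * (w2 z - W2 z))
            = s2 * ((p/2) * (1 - (dim_p p - 1))) * (w1 z - WW1 p z) + s2 * (p/2) * z * G"
          unfolding w2W2 using z0 by (simp add: field_simps)
        then show ?thesis unfolding dd by (simp add: algebra_simps)
      qed
      have t1: "(s1 - s2) * (w1 z - WW1 p z) \<le> 0"
      proof -
        have "s1 * y z \<le> \<bar>s1 * y z\<bar>" by (rule abs_ge_self)
        also have "\<dots> = \<bar>y z\<bar>" using s1 by (simp add: abs_mult)
        finally have "(s1 - s2) * y z \<le> 0" using s2 by (simp add: algebra_simps)
        then have "z * ((s1 - s2) * (w1 z - WW1 p z)) \<le> 0" unfolding y_def by (simp add: algebra_simps)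
        then show ?thesis using z0 by (simp add: mult_le_0_iff)
      qed
      have t2: "s2 * (p/2) * z * G \<le> (p/2) * z * \<bar>G\<bar>"
      proof -
        have "s2 * (p/2) * z * G \<le> \<bar>s2 * (p/2) * z * G\<bar>" by (rule abs_ge_self)
        also have "\<dots> = (p/2) * z * \<bar>G\<bar>" using s2 p z0 by (simp add: abs_mult)
        finally show ?thesis .
      qed
      have wb: "\<bar>w z\<bar> \<le> 2" using wv W0 vd dl by simp
      have Nb: "\<bar>\<bar>w z\<bar> powr (2*p) * w z - \<bar>Wz\<bar> powr (2*p) * Wz\<bar> \<le> 12 * (Wz powr (2*p) + D2) * \<Phi> z"
      proof -
        have "\<bar>\<bar>w z\<bar> powr (2*p) * w z - \<bar>Wz\<bar> powr (2*p) * Wz\<bar> \<le> 12 * (Wz powr (2*p) + \<bar>v z\<bar> powr (2*p)) * \<bar>v z\<bar>"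
          unfolding wv using N_est[where W=Wz and v="v z" and p=p] W0 p by simp
        also have "\<dots> \<le> 12 * (Wz powr (2*p) + D2) * \<Phi> z"
        proof -
          have "\<bar>v z\<bar> powr (2*p) \<le> D2" unfolding D2_def using vd p by (intro powr_mono2) auto
          then show ?thesis using vP D20 by (intro mult_mono) auto
        qed
        finally show ?thesis .
      qed
      have Gb: "\<bar>G\<bar> \<le> 2*\<epsilon>\<^sup>2*z\<^sup>2 + 2*\<bar>lam\<bar>*\<epsilon> + 12 * (Wz powr (2*p) + D2) * \<Phi> z"
      proof -
        have "\<bar>G\<bar> \<le> \<epsilon>\<^sup>2*z\<^sup>2*\<bar>w z\<bar> + \<bar>lam\<bar>*\<epsilon>*\<bar>w z\<bar> + \<bar>\<bar>w z\<bar> powr (2*p) * w z - \<bar>Wz\<bar> powr (2*p) * Wz\<bar>"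
        proof -
          have tri: "\<And>A B C::real. \<bar>A - B - C\<bar> \<le> \<bar>A\<bar> + \<bar>B\<bar> + \<bar>C\<bar>" by arith
          have a1: "\<bar>\<epsilon>\<^sup>2*z\<^sup>2*w z\<bar> = \<epsilon>\<^sup>2*z\<^sup>2*\<bar>w z\<bar>" by (simp add: abs_mult)
          have a2: "\<bar>lam*\<epsilon>*w z\<bar> = \<bar>lam\<bar>*\<epsilon>*\<bar>w z\<bar>" using e0 by (simp add: abs_mult)
          show ?thesis unfolding G_def using tri[of "\<epsilon>\<^sup>2*z\<^sup>2*w z" "lam*\<epsilon>*w z"] unfolding a1 a2 by blast
        qed
        moreover have "\<epsilon>\<^sup>2*z\<^sup>2*\<bar>w z\<bar> \<le> \<epsilon>\<^sup>2*z\<^sup>2*2" using wb by (intro mult_left_mono) auto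
        moreover have "\<bar>lam\<bar>*\<epsilon>*\<bar>w z\<bar> \<le> \<bar>lam\<bar>*\<epsilon>*2" using wb e0 by (intro mult_left_mono) auto
        ultimately show ?thesis using Nb by linarith
      qed
      have Wp: "Wz powr (2*p) = 1/(1+\<alpha>*z\<^sup>2)\<^sup>2" unfolding Wz_def \<alpha>_def using WW_pow[OF p(1)] by simp
      have "(p/2) * z * \<bar>G\<bar> \<le> (p/2) * z * (2*\<epsilon>\<^sup>2*z\<^sup>2 + 2*\<bar>lam\<bar>*\<epsilon> + 12 * (Wz powr (2*p) + D2) * \<Phi> z)"
        using Gb p z0 by (intro mult_left_mono) auto
      also have "\<dots> = p*z*(\<epsilon>\<^sup>2*z\<^sup>2 + \<bar>lam\<bar>*\<epsilon>) + \<Lambda>' z * \<Phi> z"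
        unfolding \<Lambda>'_def Wp by (simp add: algebra_simps)
      also have "\<dots> < P' z + \<Lambda>' z * \<Phi> z"
      proof -
        have "p*z*(\<epsilon>\<^sup>2*z\<^sup>2 + \<bar>lam\<bar>*\<epsilon>) < (1+\<bar>lam\<bar>)*p*z*(4*\<epsilon>\<^sup>2*z\<^sup>2 + 2*\<epsilon>)"
        proof -
          have "\<epsilon>\<^sup>2*z\<^sup>2 + \<bar>lam\<bar>*\<epsilon> < (1+\<bar>lam\<bar>)*(4*\<epsilon>\<^sup>2*z\<^sup>2 + 2*\<epsilon>)"
            using e0 z0 by (simp add: algebra_simps) (smt (verit) mult_nonneg_nonneg zero_le_power2 abs_ge_zero mult_pos_pos)
          then show ?thesis using p z0 by (simp add: mult.assoc)
        qed
        also have "\<dots> = P' z" unfolding P'_def \<kappa>_def by (simp add: algebra_simps power2_eq_square power3_eq_cube)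
        finally show ?thesis by simp
      qed
      also have "\<dots> \<le> \<Phi>' z"
      proof -
        have P'0: "0 \<le> P' z" unfolding P'_def using z0 e0 k0 by (intro mult_nonneg_nonneg add_nonneg_nonneg) auto
        have "1 * P' z \<le> exp (\<Lambda> z) * P' z"
          using \<Lambda>0[of z] P'0 by (intro mult_right_mono) auto
        then have "P' z \<le> exp (\<Lambda> z) * P' z" by simp
        then show ?thesis unfolding \<Phi>'_def \<Phi>_def by (simp add: algebra_simps)
      qed
      finally have "(p/2) * z * \<bar>G\<bar> < \<Phi>' z" .
      then show ?thesis unfolding LHS using t1 t2 by linarith
    qed
  qed
  have "\<Phi> x \<le> \<delta>" using \<Phi>le x by simp
  then have r1: "\<bar>v x\<bar> \<le> \<delta>" and r2: "(p/2) * \<bar>y x\<bar> \<le> \<delta>" using res c0 by (smt (verit) mult_nonneg_nonneg abs_ge_zero)+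
  have "\<bar>y x\<bar> \<le> 2/p*\<delta>" using r2 p by (simp add: field_simps)
  then show ?thesis using r1 unfolding v_def y_def w_def w1_def by simp
qed



lemma per_b:
  fixes p lam T a b \<delta> K0 :: real and f :: "real \<Rightarrow> real"
  assumes p: "0 < p" "p \<le> 1" and a: "0 < a" "a < 1" and b: "1 \<le> b"
    and K0: "K0 = exp (3*p*(1/alpha_p p + 1)) * (1 + (1+\<bar>lam\<bar>)*p*(exp (4*T) + exp (2*T)))"
    and dlt: "\<delta> = K0 * b powr (-2*p*(1-a))"
    and dl: "\<delta> \<le> 1" "\<delta> powr (2*p) * (exp T * b powr (a*p))\<^sup>2 \<le> 1"
    and rs: "radial_sol p lam b f"
    and t: "t \<le> T + a * p * ln b"
  shows "\<bar>Psi p f (t - p * ln b) - Theta_h p t\<bar> \<le> (3*K0/p) * b powr (- 2 * p * (1 - a)) * exp (t / p)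
     \<and> \<bar>deriv (Psi p f) (t - p * ln b) - deriv (Theta_h p) t\<bar> \<le> (3*K0/p) * b powr (- 2 * p * (1 - a)) * exp (t / p)"
proof -
  have b0: "0 < b" using b by simp
  obtain f1 f2 where f0: "f 0 = b" and fd0: "(f has_real_derivative 0) (at 0 within {0..})"
    and fr: "\<And>r. r > 0 \<Longrightarrow> (f has_real_derivative f1 r) (at r) \<and> (f1 has_real_derivative f2 r) (at r) \<and>
        f2 r + (dim_p p - 1) / r * f1 r - r\<^sup>2 * f r + lam * f r + \<bar>f r\<bar> powr (2 * p) * f r = 0"
    using rs unfolding radial_sol_def by blast
  have fc0: "continuous (at 0 within {0..}) f" using DERIV_continuous[OF fd0] .
  define \<beta> where "\<beta> = b powr p"
  define \<epsilon> where "\<epsilon> = 1/\<beta>\<^sup>2"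
  define R where "R = exp T * b powr (a*p)"
  define B where "B = b powr (-2*p*(1-a))"
  have B0: "0 < B" unfolding B_def using b0 by simp
  have bt0: "0 < \<beta>" unfolding \<beta>_def using b0 by simp
  have R0: "0 < R" unfolding R_def using b0 by simp
  have eps: "\<epsilon> = b powr (-2*p)"
    unfolding \<epsilon>_def \<beta>_def using b0 by (simp add: powr_power powr_minus divide_inverse mult.commute)
  have eT2: "(exp T)\<^sup>2 = exp (2*T)" using exp_add[of T T] by (simp add: power2_eq_square)
  have eT4: "(exp (2*T))\<^sup>2 = exp (4*T)" using exp_add[of "2*T" "2*T"] by (simp add: power2_eq_square)
  have R2: "R\<^sup>2 = exp (2*T) * b powr (2*a*p)"
    unfolding R_def using b0 eT2 by (simp add: power_mult_distrib powr_power mult_ac)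
  have R4: "R^4 = exp (4*T) * b powr (4*a*p)"
  proof -
    have "R^4 = (R\<^sup>2)\<^sup>2" by simp
    also have "\<dots> = exp (4*T) * b powr (4*a*p)"
      unfolding R2 using b0 eT4 by (simp add: power_mult_distrib powr_power mult_ac)
    finally show ?thesis .
  qed
  have t1: "\<epsilon> \<le> B" unfolding eps B_def using b a p by (intro powr_mono) (auto simp: algebra_simps)
  have t2: "\<epsilon>\<^sup>2*R^4 \<le> exp (4*T) * B"
  proof -
    have "\<epsilon>\<^sup>2*R^4 = exp (4*T) * (b powr (-4*p) * b powr (4*a*p))"
      unfolding eps R4 using b0 by (simp add: powr_power mult_ac)
    also have "\<dots> = exp (4*T) * b powr (-4*p + 4*a*p)" by (simp only: powr_add[of b "-4*p" "4*a*p"])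
    also have "\<dots> \<le> exp (4*T) * B" unfolding B_def using b a p
      by (intro mult_left_mono powr_mono) (auto simp: algebra_simps)
    finally show ?thesis .
  qed
  have t3: "\<epsilon>*R\<^sup>2 \<le> exp (2*T) * B"
  proof -
    have "\<epsilon>*R\<^sup>2 = exp (2*T) * (b powr (-2*p) * b powr (2*a*p))"
      unfolding eps R2 by (simp add: mult_ac)
    also have "\<dots> = exp (2*T) * b powr (-2*p + 2*a*p)" by (simp only: powr_add[of b "-2*p" "2*a*p"])
    also have "\<dots> = exp (2*T) * B" unfolding B_def by (simp add: algebra_simps)
    finally show ?thesis by simp
  qed
  have dom: "exp (3*p*(1/alpha_p p + 1)) * (\<epsilon> + (1+\<bar>lam\<bar>)*p*(\<epsilon>\<^sup>2*R^4 + \<epsilon>*R\<^sup>2)) \<le> \<delta>"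
  proof -
    have kk: "0 \<le> (1+\<bar>lam\<bar>)*p" using p by simp
    have "\<epsilon> + (1+\<bar>lam\<bar>)*p*(\<epsilon>\<^sup>2*R^4 + \<epsilon>*R\<^sup>2) \<le> B + (1+\<bar>lam\<bar>)*p*(exp (4*T) * B + exp (2*T) * B)"
      using t1 t2 t3 kk by (intro add_mono mult_left_mono) auto
    also have "\<dots> = (1 + (1+\<bar>lam\<bar>)*p*(exp (4*T) + exp (2*T))) * B" by (simp add: algebra_simps)
    finally have "exp (3*p*(1/alpha_p p + 1)) * (\<epsilon> + (1+\<bar>lam\<bar>)*p*(\<epsilon>\<^sup>2*R^4 + \<epsilon>*R\<^sup>2))
        \<le> exp (3*p*(1/alpha_p p + 1)) * ((1 + (1+\<bar>lam\<bar>)*p*(exp (4*T) + exp (2*T))) * B)"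
      by (intro mult_left_mono) auto
    then show ?thesis unfolding dlt K0 B_def by (simp add: mult_ac)
  qed
  define x where "x = exp t"
  have x0: "0 < x" unfolding x_def by simp
  have xR: "x \<le> R"
  proof -
    have "x \<le> exp (T + a * p * ln b)" unfolding x_def using t by simp
    also have "\<dots> = R" unfolding R_def using b0 by (simp add: exp_add powr_def mult_ac)
    finally show ?thesis .
  qed
  have est: "\<bar>f (x/\<beta>)/b - WW p x\<bar> \<le> \<delta> \<and> \<bar>x*(f1 (x/\<beta>)/(b*\<beta>) - WW1 p x)\<bar> \<le> 2/p*\<delta>"
    by (rule main_est[OF p b0 \<beta>_def \<epsilon>_def f0 fc0 _ _ _ R0 dl(1) _ dom x0 xR])
       (use fr dl(2) R_def in auto)
  define s where "s = t - p * ln b"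
  have es: "exp s = x/\<beta>" unfolding s_def x_def \<beta>_def using b0 by (simp add: exp_diff powr_def mult_ac)
  have esp: "exp (s/p) = exp (t/p) / b" unfolding s_def using b0 p by (simp add: diff_divide_distrib exp_diff)
  have Ps: "Psi p f s = exp (t/p) * (f (x/\<beta>)/b)" unfolding Psi_def es esp by simp
  have Th: "Theta_h p t = exp (t/p) * WW p x" unfolding x_def by (rule Theta_eq[OF p(1)])
  have dPsi: "(Psi p f has_real_derivative exp (s/p) * (1/p) * f (exp s) + f1 (exp s) * exp s * exp (s/p)) (at s)"
  proof -
    have h1: "(f has_real_derivative f1 (exp s)) (at (exp s))" using fr[of "exp s"] by simp
    have "((\<lambda>s. f (exp s)) has_real_derivative f1 (exp s) * exp s) (at s)"
      using DERIV_chain2[OF h1 DERIV_exp] by simp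
    moreover have "((\<lambda>s. exp (s/p)) has_real_derivative exp (s/p) * (1/p)) (at s)"
      using p by (auto intro!: derivative_eq_intros)
    ultimately have "((\<lambda>s. exp (s/p) * f (exp s)) has_real_derivative exp (s/p) * (1/p) * f (exp s) + f1 (exp s) * exp s * exp (s/p)) (at s)"
      by (rule DERIV_mult[rotated])
    then show ?thesis unfolding Psi_def[abs_def] by simp
  qed
  have dPs: "deriv (Psi p f) s = exp (t/p) * (f (x/\<beta>)/b / p + x * (f1 (x/\<beta>)/(b*\<beta>)))"
    unfolding DERIV_imp_deriv[OF dPsi] es esp using b0 bt0 p by (simp add: field_simps)
  have dTh: "deriv (Theta_h p) t = exp (t/p) * (WW p x / p + x * WW1 p x)"
    unfolding x_def by (rule DERIV_imp_deriv[OF Theta_deriv[OF p(1)]])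
  have Cd: "\<delta> \<le> (3*K0/p) * B"
  proof -
    have "0 \<le> K0" unfolding K0 using p by (intro mult_nonneg_nonneg add_nonneg_nonneg) auto
    then have "0 \<le> \<delta>" unfolding dlt using B0 B_def by simp
    have "\<delta> * p \<le> \<delta> * 3" using \<open>0 \<le> \<delta>\<close> p by (intro mult_left_mono) auto
    then have "\<delta> \<le> 3 * \<delta> / p" using p by (simp add: field_simps)
    then show ?thesis unfolding dlt B_def by (simp add: field_simps)
  qed
  have e1: "\<bar>Psi p f (t - p * ln b) - Theta_h p t\<bar> = exp (t/p) * \<bar>f (x/\<beta>)/b - WW p x\<bar>"
  proof -
    have "Psi p f (t - p * ln b) - Theta_h p t = exp (t/p) * (f (x/\<beta>)/b - WW p x)"
      using Ps Th unfolding s_def by (simp add: right_diff_distrib)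
    then show ?thesis by (simp add: abs_mult)
  qed
  have e2: "\<bar>deriv (Psi p f) (t - p * ln b) - deriv (Theta_h p) t\<bar>
      = exp (t/p) * \<bar>(f (x/\<beta>)/b - WW p x)/p + x*(f1 (x/\<beta>)/(b*\<beta>) - WW1 p x)\<bar>"
  proof -
    have "deriv (Psi p f) (t - p * ln b) - deriv (Theta_h p) t = exp (t/p) * ((f (x/\<beta>)/b - WW p x)/p + x*(f1 (x/\<beta>)/(b*\<beta>) - WW1 p x))"
      using dPs dTh unfolding s_def by (simp add: algebra_simps diff_divide_distrib)
    then show ?thesis by (simp add: abs_mult)
  qed
  have b1: "\<bar>f (x/\<beta>)/b - WW p x\<bar> \<le> (3*K0/p) * B" using conjunct1[OF est] Cd by (rule order_trans)
  have b2: "\<bar>(f (x/\<beta>)/b - WW p x)/p + x*(f1 (x/\<beta>)/(b*\<beta>) - WW1 p x)\<bar> \<le> (3*K0/p) * B"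
  proof -
    have "\<bar>(f (x/\<beta>)/b - WW p x)/p + x*(f1 (x/\<beta>)/(b*\<beta>) - WW1 p x)\<bar>
        \<le> \<bar>f (x/\<beta>)/b - WW p x\<bar>/p + \<bar>x*(f1 (x/\<beta>)/(b*\<beta>) - WW1 p x)\<bar>"
    proof -
      have tri2: "\<bar>u/p + w\<bar> \<le> \<bar>u\<bar>/p + \<bar>w\<bar>" for u w :: real
      proof -
        have "\<bar>u/p + w\<bar> \<le> \<bar>u/p\<bar> + \<bar>w\<bar>" by (rule abs_triangle_ineq)
        also have "\<bar>u/p\<bar> = \<bar>u\<bar>/p" using p by simp
        finally show ?thesis .
      qed
      show ?thesis by (rule tri2)
    qed
    also have "\<dots> \<le> \<delta>/p + 2/p*\<delta>" using conjunct1[OF est] conjunct2[OF est] p by (intro add_mono divide_right_mono) auto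
    also have "\<dots> = 3*\<delta>/p" by (simp add: field_simps)
    also have "\<dots> = (3*K0/p) * B" unfolding dlt B_def by simp
    finally show ?thesis .
  qed
  have m1: "\<bar>f (x/\<beta>)/b - WW p x\<bar> * exp (t/p) \<le> (3*K0/p) * B * exp (t/p)"
    using b1 by (rule mult_right_mono) simp
  have m2: "\<bar>(f (x/\<beta>)/b - WW p x)/p + x*(f1 (x/\<beta>)/(b*\<beta>) - WW1 p x)\<bar> * exp (t/p) \<le> (3*K0/p) * B * exp (t/p)"
    using b2 by (rule mult_right_mono) simp
  show ?thesis unfolding e1 e2 B_def[symmetric] using m1 m2 by (metis mult.commute)
qed



lemma pw_ge:
  fixes X e b :: real
  assumes "0 < X" "0 < e" "X powr (1/e) \<le> b"
  shows "X \<le> b powr e"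
proof -
  have "(X powr (1/e)) powr e \<le> b powr e" using assms by (intro powr_mono2) auto
  moreover have "(X powr (1/e)) powr e = X" using assms by (simp add: powr_powr)
  ultimately show ?thesis by simp
qed

theorem mainTheorem3:
  fixes p lam T a :: real
  assumes "0 < p" "p \<le> 1" "T > 0" "0 < a" "a < p / (1 + p)"
  shows "\<exists>b0 > 0. \<exists>C > 0. \<forall>b \<ge> b0. \<forall>f. radial_sol p lam b f \<longrightarrow>
           (\<forall>t \<le> T + a * p * ln b.
              \<bar>Psi p f (t - p * ln b) - Theta_h p t\<bar>
                \<le> C * b powr (- 2 * p * (1 - a)) * exp (t / p)
            \<and> \<bar>deriv (Psi p f) (t - p * ln b) - deriv (Theta_h p) t\<bar>
                \<le> C * b powr (- 2 * p * (1 - a)) * exp (t / p))"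
proof -
  have p: "0 < p" "p \<le> 1" using assms by auto
  have ap: "a * (1 + p) < p" using assms(5) p by (simp add: field_simps)
  have a1: "a < 1" using ap p by (simp add: algebra_simps) (smt (verit) mult_pos_pos assms(4))
  define K0 where "K0 = exp (3*p*(1/alpha_p p + 1)) * (1 + (1+\<bar>lam\<bar>)*p*(exp (4*T) + exp (2*T)))"
  have K0: "0 < K0" unfolding K0_def using p by (intro mult_pos_pos add_pos_nonneg mult_nonneg_nonneg) auto
  define e1 where "e1 = 2*p*(1-a)"
  have e1: "0 < e1" unfolding e1_def using p a1 by simp
  define \<gamma> where "\<gamma> = 4*p\<^sup>2*(1-a) - 2*a*p"
  have g: "0 < \<gamma>"
  proof -
    have "a < p*(1-a)" using ap by (simp add: algebra_simps)
    then have "2*a*p < 2*p*(p*(1-a))" using p by simp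
    also have "\<dots> \<le> 4*p\<^sup>2*(1-a)" using p a1 by (simp add: power2_eq_square)
    finally show ?thesis unfolding \<gamma>_def by simp
  qed
  define X where "X = K0 powr (2*p) * exp (2*T)"
  have X: "0 < X" unfolding X_def using K0 by simp
  define b0 where "b0 = max 1 (max (K0 powr (1/e1)) (X powr (1/\<gamma>)))"
  define C where "C = 3*K0/p"
  have C: "0 < C" unfolding C_def using K0 p by simp
  have b0p: "0 < b0" unfolding b0_def by simp
  have main: "\<forall>b \<ge> b0. \<forall>f. radial_sol p lam b f \<longrightarrow>
           (\<forall>t \<le> T + a * p * ln b.
              \<bar>Psi p f (t - p * ln b) - Theta_h p t\<bar>
                \<le> C * b powr (- 2 * p * (1 - a)) * exp (t / p)
            \<and> \<bar>deriv (Psi p f) (t - p * ln b) - deriv (Theta_h p) t\<bar>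
                \<le> C * b powr (- 2 * p * (1 - a)) * exp (t / p))"
  proof (intro allI impI)
    fix b f t
    assume b: "b0 \<le> b" and rs: "radial_sol p lam b f" and t: "t \<le> T + a * p * ln b"
    have b1: "1 \<le> b" using b unfolding b0_def by simp
    have bpos: "0 < b" using b1 by simp
    have k1: "K0 \<le> b powr e1" using pw_ge[OF K0 e1] b unfolding b0_def by simp
    have k2: "X \<le> b powr \<gamma>" using pw_ge[OF X g] b unfolding b0_def by simp
    define \<delta> where "\<delta> = K0 * b powr (-2*p*(1-a))"
    have d1: "\<delta> \<le> 1"
    proof -
      have "\<delta> = K0 / b powr e1" unfolding \<delta>_def e1_def using bpos by (simp add: powr_minus divide_inverse)
      then show ?thesis using k1 bpos by (simp add: divide_le_eq_1)
    qed
    have d2: "\<delta> powr (2*p) * (exp T * b powr (a*p))\<^sup>2 \<le> 1"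
    proof -
      have "\<delta> powr (2*p) = K0 powr (2*p) * b powr (-2*p*(1-a)*(2*p))"
        unfolding \<delta>_def using K0 bpos by (simp add: powr_mult powr_powr)
      moreover have "(exp T * b powr (a*p))\<^sup>2 = exp (2*T) * b powr (2*a*p)"
        using bpos exp_add[of T T] powr_add[of b "a*p" "a*p"] by (simp add: power_mult_distrib power2_eq_square mult_ac)
      ultimately have "\<delta> powr (2*p) * (exp T * b powr (a*p))\<^sup>2 = X * (b powr (-2*p*(1-a)*(2*p)) * b powr (2*a*p))"
        unfolding X_def by (simp add: mult_ac)
      also have "b powr (-2*p*(1-a)*(2*p)) * b powr (2*a*p) = b powr (-\<gamma>)"
        unfolding powr_add[symmetric] \<gamma>_def by (simp add: algebra_simps power2_eq_square)
      also have "X * b powr (-\<gamma>) = X / b powr \<gamma>" using bpos by (simp add: powr_minus divide_inverse)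
      also have "\<dots> \<le> 1" using k2 bpos by (simp add: divide_le_eq_1)
      finally show ?thesis .
    qed
    have "\<bar>Psi p f (t - p * ln b) - Theta_h p t\<bar> \<le> (3*K0/p) * b powr (- 2 * p * (1 - a)) * exp (t / p)
     \<and> \<bar>deriv (Psi p f) (t - p * ln b) - deriv (Theta_h p) t\<bar> \<le> (3*K0/p) * b powr (- 2 * p * (1 - a)) * exp (t / p)"
      by (rule per_b[OF p assms(4) a1 b1 K0_def \<delta>_def d1 d2 rs t])
    then show "\<bar>Psi p f (t - p * ln b) - Theta_h p t\<bar> \<le> C * b powr (- 2 * p * (1 - a)) * exp (t / p)
     \<and> \<bar>deriv (Psi p f) (t - p * ln b) - deriv (Theta_h p) t\<bar> \<le> C * b powr (- 2 * p * (1 - a)) * exp (t / p)"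
      unfolding C_def by simp
  qed
  show ?thesis using main b0p C by blast
qed


end
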